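(* Consider the linear system $\dot x(t)=Ax(t)+Bu(t)$ with constraints $(x(t),u(t))\in\mathcal{E}$ and $u(t)\in U$, and suppose (A4) and (A5) hold. Then for every $\lambda\in[0,1]$ the set $\lambda\mathcal{A}$ is control invariant. (A4): $(A,B)$ is stabilisable. (A5): $U\subset\mathbb{R}^m$ and $\mathcal{E}:=\{(x,u):g(x,u)\le0\}$, $g\in\mathcal{C}^2(\mathbb{R}^n\times\mathbb{R}^m,\mathbb{R}^p)$, are convex, compact, contain the origin in their interior, and each $u\mapsto g_i(x,u)$ is convex.
   Context: $\mathcal{U}_\infty(x_0)$ is the set of $u\in L^\infty_{\mathrm{loc}}(\mathbb{R}_{\ge0},\mathbb{R}^m)$ with $(x(t;x_0,u),u(t))\in\mathcal{E}$ and $u(t)\in U$ for all $t\ge0$; $\mathcal{A}:=\{x_0:\mathcal{U}_\infty(x_0)\neq\emptyset\}$, $\lambda\mathcal{A}:=\{\lambda x:x\in\mathcal{A}\}$. A set $S$ is control invariant if for every $x_0\in S$, $\mathcal{U}_\infty(x_0)\neq\emptyset$ and there is $u\in\mathcal{U}_\infty(x_0)$ with $x(t;x_0,u)\in S$ for all $t\ge0$. *)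

theory Defs
  imports "HOL-Analysis.Analysis"
begin

definition C2 :: "('a::real_normed_vector \<Rightarrow> 'b::real_normed_vector) \<Rightarrow> bool" where
  "C2 f \<longleftrightarrow> (\<exists>(Df :: 'a \<Rightarrow> ('a \<Rightarrow>\<^sub>L 'b)) (D2f :: 'a \<Rightarrow> ('a \<Rightarrow>\<^sub>L ('a \<Rightarrow>\<^sub>L 'b))).
      (\<forall>z. (f has_derivative blinfun_apply (Df z)) (at z)) \<and>
      (\<forall>z. (Df has_derivative blinfun_apply (D2f z)) (at z)) \<and>
      continuous_on UNIV D2f)"

definition hurwitz :: "real^'n^'n \<Rightarrow> bool" where
  "hurwitz M \<longleftrightarrow> (\<forall>(l::complex) (v::complex^'n).
      v \<noteq> 0 \<and> (\<chi> i j. complex_of_real (M $ i $ j)) *v v = l *s v \<longrightarrow> Re l < 0)"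

definition stabilisable :: "real^'n^'n \<Rightarrow> real^'m^'n \<Rightarrow> bool" where
  "stabilisable A B \<longleftrightarrow> (\<exists>K :: real^'n^'m. hurwitz (A + B ** K))"

definition Linf_loc :: "(real \<Rightarrow> 'a::euclidean_space) \<Rightarrow> bool" where
  "Linf_loc u \<longleftrightarrow> u \<in> borel_measurable (restrict_space lborel {0..}) \<and>
     (\<forall>T\<ge>0. \<exists>C. AE t in lborel. t \<in> {0..T} \<longrightarrow> norm (u t) \<le> C)"

text \<open>(Caratheodory) solution of x' = A x + B u, x(0) = x0, on [0,inf).\<close>
definition is_traj :: "real^'n^'n \<Rightarrow> real^'m^'n \<Rightarrow> real^'n \<Rightarrow> (real \<Rightarrow> real^'m) \<Rightarrow> (real \<Rightarrow> real^'n) \<Rightarrow> bool" where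
  "is_traj A B x0 u x \<longleftrightarrow> continuous_on {0..} x \<and>
     (\<forall>t\<ge>0. (\<lambda>s. A *v x s + B *v u s) integrable_on {0..t} \<and>
             x t = x0 + integral {0..t} (\<lambda>s. A *v x s + B *v u s))"

text \<open>x(t;x0,u): the value at time t of the (unique) solution.\<close>
definition traj :: "real^'n^'n \<Rightarrow> real^'m^'n \<Rightarrow> real^'n \<Rightarrow> (real \<Rightarrow> real^'m) \<Rightarrow> real \<Rightarrow> real^'n" where
  "traj A B x0 u t = (THE y. \<exists>x. is_traj A B x0 u x \<and> x t = y)"

definition Uinf :: "real^'n^'n \<Rightarrow> real^'m^'n \<Rightarrow> ((real^'n) \<times> (real^'m)) set \<Rightarrow> (real^'m) set
    \<Rightarrow> real^'n \<Rightarrow> (real \<Rightarrow> real^'m) set" where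
  "Uinf A B E U x0 = {u. Linf_loc u \<and>
     (\<forall>t\<ge>0. (traj A B x0 u t, u t) \<in> E \<and> u t \<in> U)}"

definition admissible_set :: "real^'n^'n \<Rightarrow> real^'m^'n \<Rightarrow> ((real^'n) \<times> (real^'m)) set \<Rightarrow> (real^'m) set
    \<Rightarrow> (real^'n) set" where
  "admissible_set A B E U = {x0. Uinf A B E U x0 \<noteq> {}}"

definition control_invariant :: "real^'n^'n \<Rightarrow> real^'m^'n \<Rightarrow> ((real^'n) \<times> (real^'m)) set \<Rightarrow> (real^'m) set
    \<Rightarrow> (real^'n) set \<Rightarrow> bool" where
  "control_invariant A B E U S \<longleftrightarrow> (\<forall>x0\<in>S. Uinf A B E U x0 \<noteq> {} \<and>
      (\<exists>u\<in>Uinf A B E U x0. \<forall>t\<ge>0. traj A B x0 u t \<in> S))"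

end

theory Submission
  imports Defs
begin

lemma cont_from_Icc:
  fixes x :: "real \<Rightarrow> 'a::topological_space"
  assumes "\<And>T. T \<ge> 0 \<Longrightarrow> continuous_on {0..T} x"
  shows "continuous_on {0..} x"
  unfolding continuous_on_def
proof
  fix t :: real assume t: "t \<in> {0..}"
  have "at t within {0..} = at t within {0..t+1}"
    by (rule at_within_nhd[of _ "{..<t+1}"]) auto
  moreover have "(x \<longlongrightarrow> x t) (at t within {0..t+1})"
    using assms[of "t+1"] t unfolding continuous_on_def by auto
  ultimately show "(x \<longlongrightarrow> x t) (at t within {0..})" by simp
qed

lemma mat_bound:
  fixes A :: "real^'n^'m"
  obtains a :: real where "a > 0" "\<And>v. norm (A *v v) \<le> a * norm v"
proof -
  have "bounded_linear ((*v) A)" by simp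
  from bounded_linear.pos_bounded[OF this] show ?thesis using that by (auto simp: mult.commute)
qed

lemma poly_integral:
  fixes a M t :: real
  assumes "t \<ge> 0"
  shows "integral {0..t} (\<lambda>s. a * (M * (a * s)^k / fact k)) = M * (a * t)^(Suc k) / fact (Suc k)"
proof -
  have "((\<lambda>s. a * (M * (a * s)^k / fact k)) has_integral
        (M * (a * t)^(Suc k) / fact (Suc k) - M * (a*0)^(Suc k) / fact (Suc k))) {0..t}"
  proof (rule fundamental_theorem_of_calculus)
    fix s assume "s \<in> {0..t}"
    have "((\<lambda>s. (M * a^(Suc k) / fact (Suc k)) * s^(Suc k)) has_real_derivative
        (M * a^(Suc k) / fact (Suc k)) * (real (Suc k) * s^k)) (at s)"
      using DERIV_cmult[OF DERIV_pow[of "Suc k" s], of "M * a^(Suc k) / fact (Suc k)"] by simp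
    moreover have "(M * a^(Suc k) / fact (Suc k)) * (real (Suc k) * s^k) = a * (M * (a * s)^k / fact k)"
    proof -
      have f: "fact k > (0::real)" by simp
      have "(M * a^(Suc k) / fact (Suc k)) * (real (Suc k) * s^k) = (M * a^(Suc k) / (real (Suc k) * fact k)) * (real (Suc k) * s^k)"
        by (simp add: fact_Suc)
      also have "\<dots> = M * a^(Suc k) * s^k / fact k" using f by (simp add: field_simps del: of_nat_Suc)
      also have "\<dots> = a * (M * (a * s)^k / fact k)" by (simp add: power_mult_distrib)
      finally show ?thesis .
    qed
    moreover have "(\<lambda>s. (M * a^(Suc k) / fact (Suc k)) * s^(Suc k)) = (\<lambda>s. M * (a * s)^(Suc k) / fact (Suc k))"
      by (simp add: power_mult_distrib mult_ac)
    ultimately show "((\<lambda>s. M * (a * s)^(Suc k) / fact (Suc k)) has_vector_derivative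
        a * (M * (a * s)^k / fact k)) (at s within {0..t})"
      using has_real_derivative_iff_has_vector_derivative has_vector_derivative_at_within by metis
  qed (use assms in auto)
  then have "((\<lambda>s. a * (M * (a * s)^k / fact k)) has_integral M * (a * t)^(Suc k) / fact (Suc k)) {0..t}"
    by simp
  then show ?thesis by (rule integral_unique)
qed

lemma step_bound:
  fixes A :: "real^'n^'n" and g :: "real \<Rightarrow> real^'n"
  assumes a: "\<And>v. norm (A *v v) \<le> a * norm v" "a \<ge> 0"
    and cg: "continuous_on {0..T} g"
    and bd: "\<And>s. s \<in> {0..T} \<Longrightarrow> norm (g s) \<le> M * (a * s)^k / fact k"
    and t: "t \<in> {0..T}"
  shows "norm (integral {0..t} (\<lambda>s. A *v g s)) \<le> M * (a * t)^(Suc k) / fact (Suc k)"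
proof -
  have sub: "{0..t} \<subseteq> {0..T}" using t by auto
  have "norm (integral {0..t} (\<lambda>s. A *v g s)) \<le> integral {0..t} (\<lambda>s. a * (M * (a * s)^k / fact k))"
  proof (rule integral_norm_bound_integral)
    show "(\<lambda>s. A *v g s) integrable_on {0..t}"
      by (rule integrable_continuous_interval) (rule bounded_linear.continuous_on[OF matrix_vector_mul_bounded_linear continuous_on_subset[OF cg sub]])
    show "(\<lambda>s. a * (M * (a * s)^k / fact k)) integrable_on {0..t}"
      by (rule integrable_continuous_interval) (auto intro!: continuous_intros)
    fix s assume s: "s \<in> {0..t}"
    have "norm (A *v g s) \<le> a * norm (g s)" by (rule a)
    also have "\<dots> \<le> a * (M * (a * s)^k / fact k)"
      using mult_left_mono[OF bd[of s] a(2)] s sub by auto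
    finally show "norm (A *v g s) \<le> a * (M * (a * s)^k / fact k)" .
  qed
  also have "\<dots> = M * (a * t)^(Suc k) / fact (Suc k)" by (rule poly_integral) (use t in auto)
  finally show ?thesis .
qed

lemma exp_term_lim: "(\<lambda>k. M * x^k / fact k :: real) \<longlonglongrightarrow> 0"
proof -
  have "(\<lambda>k. inverse (fact k) * x^k :: real) \<longlonglongrightarrow> 0"
    by (rule summable_LIMSEQ_zero[OF summable_exp])
  then have "(\<lambda>k. M * (inverse (fact k) * x^k) :: real) \<longlonglongrightarrow> M * 0"
    by (intro tendsto_mult tendsto_const)
  then show ?thesis by (simp add: field_simps)
qed

lemma uniq_hom:
  fixes A :: "real^'n^'n" and d :: "real \<Rightarrow> real^'n"
  assumes cd: "continuous_on {0..} d"
    and eq: "\<And>t. t \<ge> 0 \<Longrightarrow> d t = integral {0..t} (\<lambda>s. A *v d s)"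
    and t: "t \<ge> 0"
  shows "d t = 0"
proof -
  obtain a where a: "a > 0" "\<And>v. norm (A *v v) \<le> a * norm v" using mat_bound by blast
  have cdt: "continuous_on {0..t} d" using continuous_on_subset[OF cd] by auto
  have "compact (d ` {0..t})" by (rule compact_continuous_image[OF cdt]) auto
  then obtain M where M: "\<And>s. s \<in> {0..t} \<Longrightarrow> norm (d s) \<le> M"
    using compact_imp_bounded bounded_iff by (metis image_eqI)
  have bd: "\<forall>s\<in>{0..t}. norm (d s) \<le> M * (a * s)^k / fact k" for k
  proof (induction k)
    case 0 then show ?case using M by simp
  next
    case (Suc k)
    show ?case
    proof
      fix s assume s: "s \<in> {0..t}"
      have "norm (integral {0..s} (\<lambda>r. A *v d r)) \<le> M * (a * s)^(Suc k) / fact (Suc k)"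
        by (rule step_bound[OF a(2) _ cdt _ s]) (use a Suc in auto)
      then show "norm (d s) \<le> M * (a * s)^(Suc k) / fact (Suc k)" using eq[of s] s by simp
    qed
  qed
  have "(\<lambda>k. M * (a * t)^k / fact k) \<longlonglongrightarrow> 0" by (rule exp_term_lim)
  moreover have "\<forall>k. norm (d t) \<le> M * (a * t)^k / fact k" using bd t by auto
  ultimately have "norm (d t) \<le> 0"
    by (intro tendsto_le[OF _ _ tendsto_const]) auto
  then show ?thesis by simp
qed

lemma exists_sol:
  fixes A :: "real^'n^'n" and f :: "real \<Rightarrow> real^'n" and x0 :: "real^'n"
  assumes fint: "\<And>t. t \<ge> 0 \<Longrightarrow> f integrable_on {0..t}"
  shows "\<exists>x. continuous_on {0..} x \<and> (\<forall>t\<ge>0. (\<lambda>s. A *v x s + f s) integrable_on {0..t} \<and>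
            x t = x0 + integral {0..t} (\<lambda>s. A *v x s + f s))"
proof -
  obtain a where a: "a > 0" "\<And>v. norm (A *v v) \<le> a * norm v" using mat_bound by blast
  define X where "X = rec_nat (\<lambda>t. x0) (\<lambda>k Xk t. x0 + integral {0..t} (\<lambda>s. A *v Xk s + f s))"
  have X0: "X 0 = (\<lambda>t. x0)" by (simp add: X_def)
  have XS: "X (Suc k) = (\<lambda>t. x0 + integral {0..t} (\<lambda>s. A *v X k s + f s))" for k by (simp add: X_def)
  have intA: "(\<lambda>s. A *v g s) integrable_on {0..t}" if "continuous_on {0..t} g" for g :: "real \<Rightarrow> real^'n" and t
    by (rule integrable_continuous_interval)
       (rule bounded_linear.continuous_on[OF matrix_vector_mul_bounded_linear that])
  have contX: "continuous_on {0..T} (X k)" if "T \<ge> 0" for k T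
  proof (induction k)
    case 0 then show ?case by (simp add: X0)
  next
    case (Suc k)
    have "(\<lambda>s. A *v X k s + f s) integrable_on {0..T}"
      by (rule integrable_add[OF intA[OF Suc] fint[OF that]])
    then have "continuous_on {0..T} (\<lambda>t. integral {0..t} (\<lambda>s. A *v X k s + f s))"
      by (rule indefinite_integral_continuous_1)
    then show ?case unfolding XS by (intro continuous_intros)
  qed
  have intg: "(\<lambda>s. A *v X k s + f s) integrable_on {0..t}" if "t \<ge> 0" for k t
    by (rule integrable_add[OF intA[OF contX[OF that]] fint[OF that]])
  define D where "D k t = X (Suc k) t - X k t" for k t
  have contD: "continuous_on {0..T} (D k)" if "T \<ge> 0" for k T
    unfolding D_def by (intro continuous_intros contX that)
  have DS: "D (Suc k) t = integral {0..t} (\<lambda>s. A *v D k s)" if "t \<ge> 0" for k t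
  proof -
    have "D (Suc k) t = integral {0..t} (\<lambda>s. A *v X (Suc k) s + f s) - integral {0..t} (\<lambda>s. A *v X k s + f s)"
      by (simp add: D_def XS[of "Suc k"] XS[of k])
    also have "\<dots> = integral {0..t} (\<lambda>s. (A *v X (Suc k) s + f s) - (A *v X k s + f s))"
      by (rule integral_diff[symmetric]) (use intg that in auto)
    also have "\<dots> = integral {0..t} (\<lambda>s. A *v D k s)"
      by (simp add: D_def matrix_vector_mult_diff_distrib)
    finally show ?thesis .
  qed
  have Xsum: "X k t = x0 + (\<Sum>i<k. D i t)" for k t
    by (induction k) (simp_all add: X0 D_def)
  have Dbound: "\<exists>M. \<forall>k. \<forall>s\<in>{0..T}. norm (D k s) \<le> M * (a * T)^k / fact k" if T: "T \<ge> 0" for T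
  proof -
    have "compact (D 0 ` {0..T})" by (rule compact_continuous_image[OF contD[OF T]]) auto
    then obtain M where M: "\<And>s. s \<in> {0..T} \<Longrightarrow> norm (D 0 s) \<le> M"
      using compact_imp_bounded bounded_iff by (metis image_eqI)
    have M0: "M \<ge> 0" using M[of 0] T by (meson atLeastAtMost_iff norm_ge_zero order.trans order_refl)
    have bd: "\<forall>s\<in>{0..T}. norm (D k s) \<le> M * (a * s)^k / fact k" for k
    proof (induction k)
      case 0 then show ?case using M by simp
    next
      case (Suc k)
      show ?case
      proof
        fix s assume s: "s \<in> {0..T}"
        have "norm (integral {0..s} (\<lambda>r. A *v D k r)) \<le> M * (a * s)^(Suc k) / fact (Suc k)"
          by (rule step_bound[OF a(2) _ contD[OF T] _ s]) (use a Suc in auto)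
        then show "norm (D (Suc k) s) \<le> M * (a * s)^(Suc k) / fact (Suc k)" using DS[of s] s by simp
      qed
    qed
    have "norm (D k s) \<le> M * (a * T)^k / fact k" if s: "s \<in> {0..T}" for k s
    proof -
      have "(a * s)^k \<le> (a * T)^k" using s a by (intro power_mono mult_left_mono) auto
      then have "M * (a * s)^k / fact k \<le> M * (a * T)^k / fact k"
        using M0 by (intro divide_right_mono mult_left_mono) auto
      then show ?thesis using bd s by (meson order.trans)
    qed
    then show ?thesis by blast
  qed
  have summ: "summable (\<lambda>k. M * (a * T)^k / fact k)" for M T :: real
  proof -
    have "summable (\<lambda>k. M * (inverse (fact k) * (a * T)^k))"
      by (rule summable_mult[OF summable_exp])
    then show ?thesis by (simp add: field_simps)
  qed
  define Xi where "Xi t = x0 + (\<Sum>i. D i t)" for t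
  have unif: "uniform_limit {0..T} X Xi sequentially" if T: "T \<ge> 0" for T
  proof -
    obtain M where M: "\<And>k s. s \<in> {0..T} \<Longrightarrow> norm (D k s) \<le> M * (a * T)^k / fact k"
      using Dbound[OF T] by blast
    have "uniform_limit {0..T} (\<lambda>k t. \<Sum>i<k. D i t) (\<lambda>t. \<Sum>i. D i t) sequentially"
      by (rule Weierstrass_m_test[OF M summ])
    then have "uniform_limit {0..T} (\<lambda>k t. x0 + (\<Sum>i<k. D i t)) (\<lambda>t. x0 + (\<Sum>i. D i t)) sequentially"
      by (intro uniform_limit_add uniform_limit_const)
    then show ?thesis by (simp add: Xsum[abs_def] Xi_def[abs_def])
  qed
  have contXi: "continuous_on {0..T} Xi" if "T \<ge> 0" for T
    by (rule uniform_limit_theorem[OF _ unif[OF that]]) (auto intro: contX[OF that] always_eventually)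
  have contXi': "continuous_on {0..} Xi" by (rule cont_from_Icc[OF contXi])
  have eq: "Xi t = x0 + integral {0..t} (\<lambda>s. A *v Xi s + f s)" if t: "t \<ge> 0" for t
  proof -
    have ul: "uniform_limit {0..t} (\<lambda>k s. A *v X k s) (\<lambda>s. A *v Xi s) sequentially"
      by (rule bounded_linear.uniform_limit[OF matrix_vector_mul_bounded_linear unif[OF t]])
    obtain I J where I: "\<And>k. ((\<lambda>s. A *v X k s) has_integral I k) {0..t}"
      and J: "((\<lambda>s. A *v Xi s) has_integral J) {0..t}" and IJ: "I \<longlonglongrightarrow> J"
      by (rule uniform_limit_integral[OF ul])
         (auto intro: bounded_linear.continuous_on[OF matrix_vector_mul_bounded_linear contX[OF t]])
    have XSt: "X (Suc k) t = x0 + (I k + integral {0..t} f)" for k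
    proof -
      have "integral {0..t} (\<lambda>s. A *v X k s + f s) = integral {0..t} (\<lambda>s. A *v X k s) + integral {0..t} f"
        by (rule integral_add) (use I fint[OF t] in auto)
      then show ?thesis using I[of k] by (simp add: XS integral_unique)
    qed
    have "(\<lambda>k. X (Suc k) t) \<longlonglongrightarrow> x0 + (J + integral {0..t} f)"
      unfolding XSt by (intro tendsto_intros IJ)
    moreover have "(\<lambda>k. X (Suc k) t) \<longlonglongrightarrow> Xi t"
      using LIMSEQ_Suc[OF tendsto_uniform_limitI[OF unif[OF t], of t]] t by simp
    ultimately have "Xi t = x0 + (J + integral {0..t} f)" using LIMSEQ_unique by blast
    also have "J + integral {0..t} f = integral {0..t} (\<lambda>s. A *v Xi s + f s)"
      using integral_add[of "\<lambda>s. A *v Xi s" "{0..t}" f] J fint[OF t] by (auto simp: integral_unique)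
    finally show ?thesis .
  qed
  have "(\<lambda>s. A *v Xi s + f s) integrable_on {0..t}" if "t \<ge> 0" for t
    by (rule integrable_add[OF intA[OF contXi[OF that]] fint[OF that]])
  then show ?thesis using contXi' eq by blast
qed

lemma traj_unique:
  assumes x: "is_traj A B x0 u x" and t: "t \<ge> 0"
  shows "traj A B x0 u t = x t"
  unfolding traj_def
proof (rule the_equality)
  show "\<exists>x'. is_traj A B x0 u x' \<and> x' t = x t" using x by blast
next
  fix y assume "\<exists>x'. is_traj A B x0 u x' \<and> x' t = y"
  then obtain y' where y': "is_traj A B x0 u y'" "y' t = y" by blast
  define d where "d s = y' s - x s" for s
  have "continuous_on {0..} d" using x y' unfolding is_traj_def d_def by (auto intro: continuous_intros)
  moreover have "d s = integral {0..s} (\<lambda>r. A *v d r)" if s: "s \<ge> 0" for s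
  proof -
    have "d s = integral {0..s} (\<lambda>r. A *v y' r + B *v u r) - integral {0..s} (\<lambda>r. A *v x r + B *v u r)"
      using x y' s unfolding is_traj_def d_def by auto
    also have "\<dots> = integral {0..s} (\<lambda>r. (A *v y' r + B *v u r) - (A *v x r + B *v u r))"
      by (rule integral_diff[symmetric]) (use x y' s in \<open>auto simp: is_traj_def\<close>)
    also have "\<dots> = integral {0..s} (\<lambda>r. A *v d r)"
      by (simp add: d_def matrix_vector_mult_diff_distrib)
    finally show ?thesis .
  qed
  ultimately have "d t = 0" using uniq_hom t by blast
  then show "y = x t" using y' by (simp add: d_def)
qed

lemma Linf_loc_integrable:
  fixes u :: "real \<Rightarrow> 'a::euclidean_space"
  assumes u: "Linf_loc u" and t: "t \<ge> 0"
  shows "u integrable_on {0..t}"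
proof -
  obtain C where C: "AE s in lborel. s \<in> {0..t} \<longrightarrow> norm (u s) \<le> C"
    using u t unfolding Linf_loc_def by blast
  have m: "(\<lambda>s. indicator {0..} s *\<^sub>R u s) \<in> borel_measurable lborel"
    using u borel_measurable_restrict_space_iff[of "{0..}" lborel u] unfolding Linf_loc_def by simp
  have eqf: "(\<lambda>s. indicator {0..t} s *\<^sub>R u s) = (\<lambda>s. indicator {0..t} s *\<^sub>R (indicator {0..} s *\<^sub>R u s))"
    by (auto simp: indicator_def fun_eq_iff)
  have "integrable lborel (\<lambda>s. indicator {0..t} s *\<^sub>R u s)"
  proof (rule Bochner_Integration.integrable_bound)
    show "integrable lborel (\<lambda>s. indicator {0..t} s * C :: real)"
      using t by (intro integrable_mult_left integrable_real_indicator) (auto simp: emeasure_lborel_Icc)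
    show "(\<lambda>s. indicator {0..t} s *\<^sub>R u s) \<in> borel_measurable lborel"
      unfolding eqf by (intro borel_measurable_scaleR m) simp
    show "AE s in lborel. norm (indicator {0..t} s *\<^sub>R u s) \<le> norm (indicator {0..t} s * C :: real)"
      using C by eventually_elim (auto simp: indicator_def)
  qed
  then have "set_integrable lborel {0..t} u" by (simp add: set_integrable_def)
  then show ?thesis by (rule set_borel_integral_eq_integral(1))
qed

lemma Linf_loc_scale:
  fixes u :: "real \<Rightarrow> 'a::euclidean_space"
  assumes u: "Linf_loc u"
  shows "Linf_loc (\<lambda>t. c *\<^sub>R u t)"
  unfolding Linf_loc_def
proof safe
  show "(\<lambda>t. c *\<^sub>R u t) \<in> borel_measurable (restrict_space lborel {0..})"
    using u unfolding Linf_loc_def by (intro borel_measurable_scaleR) auto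
  fix T :: real assume "T \<ge> 0"
  then obtain C where C: "AE s in lborel. s \<in> {0..T} \<longrightarrow> norm (u s) \<le> C"
    using u unfolding Linf_loc_def by blast
  have "AE s in lborel. s \<in> {0..T} \<longrightarrow> norm (c *\<^sub>R u s) \<le> \<bar>c\<bar> * C"
    using C by eventually_elim (auto intro: mult_left_mono)
  then show "\<exists>C. AE s in lborel. s \<in> {0..T} \<longrightarrow> norm (c *\<^sub>R u s) \<le> C" by blast
qed

lemma Linf_loc_shift:
  fixes u :: "real \<Rightarrow> 'a::euclidean_space"
  assumes u: "Linf_loc u" and tau: "tau \<ge> 0"
  shows "Linf_loc (\<lambda>s. u (tau + s))"
  unfolding Linf_loc_def
proof safe
  have "(\<lambda>s. tau + s) \<in> measurable (restrict_space lborel {0..}) (restrict_space lborel {0..})"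
    by (rule measurable_restrict_space3) (use tau in auto)
  then show "(\<lambda>s. u (tau + s)) \<in> borel_measurable (restrict_space lborel {0..})"
    using u unfolding Linf_loc_def by (intro measurable_compose[where f="\<lambda>s. tau + s" and g=u]) auto
  fix T :: real assume T: "T \<ge> 0"
  then obtain C where C: "AE s in lborel. s \<in> {0..tau+T} \<longrightarrow> norm (u s) \<le> C"
    using u tau unfolding Linf_loc_def by (meson add_nonneg_nonneg)
  then obtain N where N0: "{s \<in> space lborel. \<not> (s \<in> {0..tau+T} \<longrightarrow> norm (u s) \<le> C)} \<subseteq> N"
     "emeasure lborel N = 0" "N \<in> sets lborel"
    by (rule AE_E)
  have N: "N \<in> null_sets lborel" "{s \<in> space lborel. \<not> (s \<in> {0..tau+T} \<longrightarrow> norm (u s) \<le> C)} \<subseteq> N"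
    using N0 by (auto intro: null_setsI)
  have "{s. s - (- tau) \<in> N} \<in> null_sets lborel" by (rule null_sets_translation[OF N(1)])
  moreover have "{s \<in> space lborel. \<not> (s \<in> {0..T} \<longrightarrow> norm (u (tau + s)) \<le> C)} \<subseteq> {s. s - (- tau) \<in> N}"
    using N(2) tau by (auto simp: add.commute)
  ultimately have "AE s in lborel. s \<in> {0..T} \<longrightarrow> norm (u (tau + s)) \<le> C" by (rule AE_I')
  then show "\<exists>C. AE s in lborel. s \<in> {0..T} \<longrightarrow> norm (u (tau + s)) \<le> C" by blast
qed

lemma is_traj_scale:
  assumes x: "is_traj A B x0 u x"
  shows "is_traj A B (c *\<^sub>R x0) (\<lambda>t. c *\<^sub>R u t) (\<lambda>t. c *\<^sub>R x t)"
  unfolding is_traj_def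
proof safe
  show "continuous_on {0..} (\<lambda>t. c *\<^sub>R x t)" using x unfolding is_traj_def by (intro continuous_intros) auto
  fix t :: real assume t: "t \<ge> 0"
  have e: "(\<lambda>s. A *v (c *\<^sub>R x s) + B *v (c *\<^sub>R u s)) = (\<lambda>s. c *\<^sub>R (A *v x s + B *v u s))"
    by (simp add: matrix_vector_mult_scaleR scaleR_add_right)
  have i: "(\<lambda>s. A *v x s + B *v u s) integrable_on {0..t}" and xe: "x t = x0 + integral {0..t} (\<lambda>s. A *v x s + B *v u s)"
    using x t unfolding is_traj_def by auto
  show "(\<lambda>s. A *v (c *\<^sub>R x s) + B *v (c *\<^sub>R u s)) integrable_on {0..t}"
    unfolding e by (rule integrable_cmul[OF i])
  show "c *\<^sub>R x t = c *\<^sub>R x0 + integral {0..t} (\<lambda>s. A *v (c *\<^sub>R x s) + B *v (c *\<^sub>R u s))"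
    unfolding e by (subst integral_cmul) (simp add: xe scaleR_add_right)
qed

lemma is_traj_shift:
  assumes x: "is_traj A B x0 u x" and tau: "tau \<ge> 0"
  shows "is_traj A B (x tau) (\<lambda>s. u (tau + s)) (\<lambda>s. x (tau + s))"
  unfolding is_traj_def
proof safe
  have cx: "continuous_on {0..} x" using x unfolding is_traj_def by auto
  show "continuous_on {0..} (\<lambda>s. x (tau + s))"
    by (rule continuous_on_compose2[OF cx]) (use tau in \<open>auto intro!: continuous_intros\<close>)
  fix s :: real assume s: "s \<ge> 0"
  define g where "g r = A *v x r + B *v u r" for r
  have ig: "g integrable_on {0..tau+s}" and xe: "x (tau+s) = x0 + integral {0..tau+s} g"
    and xt: "x tau = x0 + integral {0..tau} g"
    using x s tau unfolding is_traj_def g_def by auto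
  have ig2: "g integrable_on {tau..tau+s}" by (rule integrable_subinterval_real[OF ig]) (use tau in auto)
  have "(g \<circ> (+) tau) integrable_on {0..s}" using ig2 integrable_on_shift_Icc_real[of g tau 0 s] by (simp add: add.commute)
  then show "(\<lambda>r. A *v x (tau + r) + B *v u (tau + r)) integrable_on {0..s}" by (simp add: g_def o_def)
  have "integral {0..tau+s} g = integral {0..tau} g + integral {tau..tau+s} g"
    using Henstock_Kurzweil_Integration.integral_combine[where a=0 and c=tau and b="tau+s" and f=g] tau s ig by simp
  moreover have "integral {tau..tau+s} g = integral {0..s} (\<lambda>r. g (r + tau))"
    using integral_shift_real_ivl[of tau tau "tau+s" g] by simp
  ultimately show "x (tau + s) = x tau + integral {0..s} (\<lambda>r. A *v x (tau + r) + B *v u (tau + r))"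
    using xe xt by (simp add: g_def add.commute)
qed

lemma exists_traj:
  fixes A :: "real^'n^'n" and B :: "real^'m^'n"
  assumes "Linf_loc u"
  shows "\<exists>x. is_traj A B x0 u x"
proof -
  have "\<And>t. t \<ge> 0 \<Longrightarrow> (\<lambda>s. B *v u s) integrable_on {0..t}"
    using integrable_linear[OF Linf_loc_integrable[OF assms] matrix_vector_mul_bounded_linear[of B]]
    by (simp add: o_def)
  from exists_sol[of "\<lambda>s. B *v u s" A x0, OF this] show ?thesis unfolding is_traj_def by blast
qed

theorem proposition7:
  fixes A :: "real^'n^'n" and B :: "real^'m^'n" and U :: "(real^'m) set"
    and g :: "(real^'n) \<times> (real^'m) \<Rightarrow> real^'p" and E :: "((real^'n) \<times> (real^'m)) set"
    and lam :: real
  assumes A4: "stabilisable A B"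
    and E_def: "E = {(x, u). \<forall>i. g (x, u) $ i \<le> 0}"
    and g_C2: "C2 g"
    and U_convex: "convex U" and U_compact: "compact U" and U_origin: "0 \<in> interior U"
    and E_convex: "convex E" and E_compact: "compact E" and E_origin: "0 \<in> interior E"
    and g_convex: "\<And>i x. convex_on UNIV (\<lambda>u. g (x, u) $ i)"
    and lam: "lam \<in> {0..1}"
  shows "control_invariant A B E U ((\<lambda>x. lam *\<^sub>R x) ` admissible_set A B E U)"
  unfolding control_invariant_def
proof
  fix z assume "z \<in> (\<lambda>x. lam *\<^sub>R x) ` admissible_set A B E U"
  then obtain y0 where y0: "y0 \<in> admissible_set A B E U" and z: "z = lam *\<^sub>R y0" by blast
  then obtain u where u: "u \<in> Uinf A B E U y0" unfolding admissible_set_def by blast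
  have uL: "Linf_loc u" and uc: "\<And>t. t \<ge> 0 \<Longrightarrow> (traj A B y0 u t, u t) \<in> E \<and> u t \<in> U"
    using u unfolding Uinf_def by auto
  obtain x where x: "is_traj A B y0 u x" using exists_traj[OF uL] by blast
  have trx: "\<And>t. t \<ge> 0 \<Longrightarrow> traj A B y0 u t = x t" using traj_unique[OF x] by blast
  have xc: "\<And>t. t \<ge> 0 \<Longrightarrow> (x t, u t) \<in> E \<and> u t \<in> U" using uc trx by metis
  have E0: "0 \<in> E" using E_origin interior_subset by blast
  have U0: "0 \<in> U" using U_origin interior_subset by blast
  have l0: "lam \<ge> 0" "1 - lam \<ge> 0" using lam by auto
  define v where "v t = lam *\<^sub>R u t" for t
  have trz: "\<And>t. t \<ge> 0 \<Longrightarrow> traj A B z v t = lam *\<^sub>R x t"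
    using traj_unique[OF is_traj_scale[OF x, of lam]] unfolding z v_def by blast
  have xadm: "x t \<in> admissible_set A B E U" if t: "t \<ge> 0" for t
  proof -
    define w where "w s = u (t + s)" for s
    have xs: "is_traj A B (x t) w (\<lambda>s. x (t + s))" using is_traj_shift[OF x t] unfolding w_def by simp
    have "w \<in> Uinf A B E U (x t)"
      unfolding Uinf_def
    proof safe
      show "Linf_loc w" unfolding w_def by (rule Linf_loc_shift[OF uL t])
      fix s :: real assume s: "s \<ge> 0"
      have "traj A B (x t) w s = x (t + s)" using traj_unique[OF xs s] .
      then show "(traj A B (x t) w s, w s) \<in> E" "w s \<in> U" using xc[of "t+s"] s t unfolding w_def by auto
    qed
    then show ?thesis unfolding admissible_set_def by blast
  qed
  have vU: "v \<in> Uinf A B E U z"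
    unfolding Uinf_def
  proof safe
    show "Linf_loc v" unfolding v_def by (rule Linf_loc_scale[OF uL])
    fix t :: real assume t: "t \<ge> 0"
    have "lam *\<^sub>R (x t, u t) + (1 - lam) *\<^sub>R 0 \<in> E"
      by (rule convexD[OF E_convex]) (use xc[OF t] E0 l0 in auto)
    then show "(traj A B z v t, v t) \<in> E" using trz[OF t] by (simp add: v_def)
    have "lam *\<^sub>R u t + (1 - lam) *\<^sub>R 0 \<in> U"
      by (rule convexD[OF U_convex]) (use xc[OF t] U0 l0 in auto)
    then show "v t \<in> U" by (simp add: v_def)
  qed
  show "Uinf A B E U z \<noteq> {} \<and>
        (\<exists>u\<in>Uinf A B E U z. \<forall>t\<ge>0. traj A B z u t \<in> (\<lambda>x. lam *\<^sub>R x) ` admissible_set A B E U)"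
  proof (intro conjI bexI[OF _ vU] allI impI)
    show "Uinf A B E U z \<noteq> {}" using vU by blast
    fix t :: real assume t: "t \<ge> 0"
    show "traj A B z v t \<in> (\<lambda>x. lam *\<^sub>R x) ` admissible_set A B E U"
      using trz[OF t] xadm[OF t] by blast
  qed
qed

end
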